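(* Let $n\geq 2$ and let $(A,\cdot,[\cdot,\ldots,\cdot])$ be a simple transposed Poisson $n$-Lie algebra. Then the $n$-Lie algebra $(A,[\cdot,\ldots,\cdot])$ is simple.
   Context: An $n$-Lie algebra is a vector space $L$ with an $n$-linear skew-symmetric bracket satisfying $[[x_1,\ldots,x_n],y_2,\ldots,y_n]=\sum_{i=1}^n[x_1,\ldots,x_{i-1},[x_i,y_2,\ldots,y_n],x_{i+1},\ldots,x_n]$; an ideal is a subspace $I$ with $[I,A,\ldots,A]\subseteq I$, and it is simple if $[A,\ldots,A]\neq 0$ and its only ideals are $0$ and $A$. A transposed Poisson $n$-Lie algebra (over $\mathbb{C}$) is a triple $(A,\cdot,[\cdot,\ldots,\cdot])$ where $(A,\cdot)$ is commutative associative, $(A,[\cdot,\ldots,\cdot])$ is an $n$-Lie algebra, and $n\,h\,[a_1,\ldots,a_n]=\sum_{i=1}^n[a_1,\ldots,h a_i,\ldots,a_n]$ for all $h,a_i\in A$. An ideal of it is a subspace $J$ with $A\cdot J\subseteq J$ and $[J,A,\ldots,A]\subseteq J$; it is simple if $[A,\ldots,A]\neq 0$ and its only ideals are $0$ and $A$. *)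

theory Defs
  imports Complex_Main
begin

text \<open>An n-ary bracket is a map B :: (nat => 'a) => 'a whose value depends only on the
arguments at positions 0, ..., n-1 (position i-1 corresponds to x_i in the paper).\<close>

definition n_linear :: "(complex \<Rightarrow> 'a::ab_group_add \<Rightarrow> 'a) \<Rightarrow> nat \<Rightarrow> ((nat \<Rightarrow> 'a) \<Rightarrow> 'a) \<Rightarrow> bool" where
  "n_linear scale n B \<longleftrightarrow>
     (\<forall>f g. (\<forall>i<n. f i = g i) \<longrightarrow> B f = B g) \<and>
     (\<forall>f. \<forall>i<n. Vector_Spaces.linear scale scale (\<lambda>x. B (f(i := x))))"

definition skew_symmetric :: "nat \<Rightarrow> ((nat \<Rightarrow> 'a::ab_group_add) \<Rightarrow> 'a) \<Rightarrow> bool" where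
  "skew_symmetric n B \<longleftrightarrow>
     (\<forall>f i j. i < n \<longrightarrow> j < n \<longrightarrow> i \<noteq> j \<longrightarrow> B (f(i := f j, j := f i)) = - B f)"

text \<open>Filippov identity: [[x_1..x_n], y_2..y_n] = sum_i [x_1,..,[x_i,y_2..y_n],..,x_n];
here y 0 is irrelevant and is overwritten.\<close>
definition filippov :: "nat \<Rightarrow> ((nat \<Rightarrow> 'a::ab_group_add) \<Rightarrow> 'a) \<Rightarrow> bool" where
  "filippov n B \<longleftrightarrow>
     (\<forall>x y. B (y(0 := B x)) = (\<Sum>i<n. B (x(i := B (y(0 := x i))))))"

definition n_Lie_algebra :: "(complex \<Rightarrow> 'a::ab_group_add \<Rightarrow> 'a) \<Rightarrow> nat \<Rightarrow> ((nat \<Rightarrow> 'a) \<Rightarrow> 'a) \<Rightarrow> bool" where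
  "n_Lie_algebra scale n B \<longleftrightarrow>
     vector_space scale \<and> n_linear scale n B \<and> skew_symmetric n B \<and> filippov n B"

definition comm_assoc_algebra :: "(complex \<Rightarrow> 'a::ab_group_add \<Rightarrow> 'a) \<Rightarrow> ('a \<Rightarrow> 'a \<Rightarrow> 'a) \<Rightarrow> bool" where
  "comm_assoc_algebra scale mul \<longleftrightarrow>
     vector_space scale \<and>
     (\<forall>a. Vector_Spaces.linear scale scale (\<lambda>x. mul a x)) \<and>
     (\<forall>a. Vector_Spaces.linear scale scale (\<lambda>x. mul x a)) \<and>
     (\<forall>a b. mul a b = mul b a) \<and>
     (\<forall>a b c. mul (mul a b) c = mul a (mul b c))"

definition transposed_Poisson_n_Lie :: "(complex \<Rightarrow> 'a::ab_group_add \<Rightarrow> 'a) \<Rightarrow> ('a \<Rightarrow> 'a \<Rightarrow> 'a) \<Rightarrow> nat \<Rightarrow> ((nat \<Rightarrow> 'a) \<Rightarrow> 'a) \<Rightarrow> bool" where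
  "transposed_Poisson_n_Lie scale mul n B \<longleftrightarrow>
     comm_assoc_algebra scale mul \<and> n_Lie_algebra scale n B \<and>
     (\<forall>h a. scale (of_nat n) (mul h (B a)) = (\<Sum>i<n. B (a(i := mul h (a i)))))"

definition n_Lie_ideal :: "(complex \<Rightarrow> 'a::ab_group_add \<Rightarrow> 'a) \<Rightarrow> nat \<Rightarrow> ((nat \<Rightarrow> 'a) \<Rightarrow> 'a) \<Rightarrow> 'a set \<Rightarrow> bool" where
  "n_Lie_ideal scale n B I \<longleftrightarrow> module.subspace scale I \<and> (\<forall>f. f 0 \<in> I \<longrightarrow> B f \<in> I)"

definition simple_n_Lie :: "(complex \<Rightarrow> 'a::ab_group_add \<Rightarrow> 'a) \<Rightarrow> nat \<Rightarrow> ((nat \<Rightarrow> 'a) \<Rightarrow> 'a) \<Rightarrow> bool" where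
  "simple_n_Lie scale n B \<longleftrightarrow>
     (\<exists>f. B f \<noteq> 0) \<and> (\<forall>I. n_Lie_ideal scale n B I \<longrightarrow> I = {0} \<or> I = UNIV)"

definition TP_ideal :: "(complex \<Rightarrow> 'a::ab_group_add \<Rightarrow> 'a) \<Rightarrow> ('a \<Rightarrow> 'a \<Rightarrow> 'a) \<Rightarrow> nat \<Rightarrow> ((nat \<Rightarrow> 'a) \<Rightarrow> 'a) \<Rightarrow> 'a set \<Rightarrow> bool" where
  "TP_ideal scale mul n B J \<longleftrightarrow>
     module.subspace scale J \<and> (\<forall>h x. x \<in> J \<longrightarrow> mul h x \<in> J) \<and> (\<forall>f. f 0 \<in> J \<longrightarrow> B f \<in> J)"

definition simple_TP :: "(complex \<Rightarrow> 'a::ab_group_add \<Rightarrow> 'a) \<Rightarrow> ('a \<Rightarrow> 'a \<Rightarrow> 'a) \<Rightarrow> nat \<Rightarrow> ((nat \<Rightarrow> 'a) \<Rightarrow> 'a) \<Rightarrow> bool" where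
  "simple_TP scale mul n B \<longleftrightarrow>
     (\<exists>f. B f \<noteq> 0) \<and> (\<forall>J. TP_ideal scale mul n B J \<longrightarrow> J = {0} \<or> J = UNIV)"

end

theory Submission
  imports Defs
begin

locale TPL = vector_space scale
  for scale :: "complex \<Rightarrow> 'a::ab_group_add \<Rightarrow> 'a" +
  fixes mul :: "'a \<Rightarrow> 'a \<Rightarrow> 'a" and n :: nat and B :: "(nat \<Rightarrow> 'a) \<Rightarrow> 'a" and I :: "'a set"
  assumes n2: "2 \<le> n"
    and Blin: "\<And>f i. i < n \<Longrightarrow> Vector_Spaces.linear scale scale (\<lambda>x. B (f(i := x)))"
    and skew: "\<And>f i j. i < n \<Longrightarrow> j < n \<Longrightarrow> i \<noteq> j \<Longrightarrow> B (f(i := f j, j := f i)) = - B f"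
    and filip: "\<And>x y. B (y(0 := B x)) = (\<Sum>i<n. B (x(i := B (y(0 := x i)))))"
    and mlin: "\<And>a. Vector_Spaces.linear scale scale (\<lambda>x. mul a x)"
    and massoc: "\<And>a b c. mul (mul a b) c = mul a (mul b c)"
    and tp: "\<And>h a. scale (of_nat n) (mul h (B a)) = (\<Sum>i<n. B (a(i := mul h (a i))))"
    and Isub: "subspace I"
    and Iid: "\<And>f. f 0 \<in> I \<Longrightarrow> B f \<in> I"
    and Inz: "I \<noteq> {0}"
    and Bnz: "\<exists>f. B f \<noteq> 0"
    and simpl: "\<And>J. subspace J \<Longrightarrow> (\<And>h x. x \<in> J \<Longrightarrow> mul h x \<in> J)
                  \<Longrightarrow> (\<And>f. f 0 \<in> J \<Longrightarrow> B f \<in> J) \<Longrightarrow> J = {0} \<or> J = UNIV"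
begin

lemma Bhom: "i < n \<Longrightarrow> module_hom scale scale (\<lambda>x. B (f(i := x)))"
  using Blin by (simp add: module_hom_iff_linear)

lemma mhom: "module_hom scale scale (\<lambda>x. mul a x)"
  using mlin by (simp add: module_hom_iff_linear)

lemma Badd: "i < n \<Longrightarrow> B (f(i := x + y)) = B (f(i := x)) + B (f(i := y))"
  using module_hom.add[OF Bhom] by blast
lemma Bscale: "i < n \<Longrightarrow> B (f(i := scale r x)) = scale r (B (f(i := x)))"
  using module_hom.scale[OF Bhom] by blast
lemma Bdiff: "i < n \<Longrightarrow> B (f(i := x - y)) = B (f(i := x)) - B (f(i := y))"
  using module_hom.diff[OF Bhom] by blast
lemma Bzero: "i < n \<Longrightarrow> B (f(i := 0)) = 0"
  using module_hom.zero[OF Bhom] by blast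

lemma madd: "mul h (x + y) = mul h x + mul h y"
  using module_hom.add[OF mhom] by blast
lemma mscale: "mul h (scale r x) = scale r (mul h x)"
  using module_hom.scale[OF mhom] by blast
lemma msum: "mul h (sum g A) = (\<Sum>x\<in>A. mul h (g x))"
  using module_hom.sum[OF mhom] by blast

lemma hom_pre: "module_hom scale scale f \<Longrightarrow> subspace S \<Longrightarrow> subspace {x. f x \<in> S}"
  by (auto intro!: subspaceI simp: module_hom.add module_hom.scale module_hom.zero
      subspace_0 subspace_add subspace_scale)

lemma n0: "0 < n" using n2 by simp

lemma c_nz: "(of_nat n :: complex) \<noteq> 0" using n2 by simp
lemma c1_nz: "(of_nat n :: complex) - 1 \<noteq> 0" using n2 by simp

lemma unscale: "subspace S \<Longrightarrow> r \<noteq> 0 \<Longrightarrow> scale r x \<in> S \<Longrightarrow> x \<in> S"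
  by (metis scale_one scale_scale subspace_scale left_inverse)

lemma slotI: assumes "j < n" "f j \<in> I" shows "B f \<in> I"
proof (cases "j = 0")
  case True thus ?thesis using Iid assms by simp
next
  case False
  have "B (f(0 := f j, j := f 0)) = - B f" using skew[of 0 j f] assms False n0 by simp
  moreover have "B (f(0 := f j, j := f 0)) \<in> I" by (rule Iid) (use False assms in simp)
  ultimately show ?thesis using subspace_neg[OF Isub] by (metis minus_minus)
qed

lemma A: assumes "j < n" "y \<in> I"
  shows "scale (of_nat n) (mul h (B (Z(j := y)))) - B (Z(j := mul h y)) \<in> I"
proof -
  have "scale (of_nat n) (mul h (B (Z(j := y)))) = (\<Sum>i<n. B ((Z(j:=y))(i := mul h ((Z(j:=y)) i))))"
    by (rule tp)
  also have "\<dots> = B ((Z(j:=y))(j := mul h ((Z(j:=y)) j))) + (\<Sum>i\<in>{..<n}-{j}. B ((Z(j:=y))(i := mul h ((Z(j:=y)) i))))"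
    by (rule sum.remove) (use assms in auto)
  finally have eq: "scale (of_nat n) (mul h (B (Z(j := y)))) - B (Z(j := mul h y)) = (\<Sum>i\<in>{..<n}-{j}. B ((Z(j:=y))(i := mul h ((Z(j:=y)) i))))"
    by simp
  show ?thesis unfolding eq
    by (rule subspace_sum[OF Isub]) (rule slotI[OF assms(1)], use assms in auto)
qed


definition G where "G = I \<union> {mul h x | h x. x \<in> I}"

lemma span_G: "span G = UNIV"
proof -
  have I0: "0 \<in> I" by (rule subspace_0[OF Isub])
  have IG: "I \<subseteq> span G" unfolding G_def using span_superset by blast
  have "span G = {0} \<or> span G = UNIV"
  proof (rule simpl)
    show "subspace (span G)" by simp
  next
    fix h x assume "x \<in> span G"
    then show "mul h x \<in> span G"
    proof (induct rule: span_induct)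
      case base
      show ?case using hom_pre[OF mhom subspace_span] by simp
    next
      case (step x)
      then show ?case
      proof (cases "x \<in> I")
        case True thus ?thesis unfolding G_def by (auto intro: span_base)
      next
        case False
        with step obtain k y where "x = mul k y" "y \<in> I" unfolding G_def by auto
        then have "mul h x = mul (mul h k) y" by (simp add: massoc)
        then show ?thesis using \<open>y \<in> I\<close> unfolding G_def by (auto intro: span_base)
      qed
    qed
  next
    fix f :: "nat \<Rightarrow> 'a" assume f0: "f 0 \<in> span G"
    have "f 0 \<in> {v. B (f(0 := v)) \<in> span G}"
      using f0
    proof (induct rule: span_induct)
      case base
      have "subspace {v. B (f(0 := v)) \<in> span G}" by (rule hom_pre[OF Bhom[OF n0] subspace_span])
      then show ?case by (simp only: mem_Collect_eq Collect_mem_eq)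
    next
      case (step v)
      show ?case
      proof (cases "v \<in> I")
        case True
        then have "B (f(0 := v)) \<in> I" by (intro Iid) simp
        then show ?thesis using IG by blast
      next
        case False
        with step obtain h x where hx: "v = mul h x" "x \<in> I" unfolding G_def by auto
        have d: "scale (of_nat n) (mul h (B (f(0 := x)))) - B (f(0 := mul h x)) \<in> I"
          by (rule A[OF n0 hx(2)])
        have "B (f(0 := x)) \<in> I" using hx by (intro Iid) simp
        then have "mul h (B (f(0 := x))) \<in> span G" unfolding G_def by (auto intro: span_base)
        then have s1: "scale (of_nat n) (mul h (B (f(0 := x)))) \<in> span G" by (rule span_scale)
        have s2: "scale (of_nat n) (mul h (B (f(0 := x)))) - B (f(0 := mul h x)) \<in> span G"
          using d IG by blast
        have "scale (of_nat n) (mul h (B (f(0 := x)))) - (scale (of_nat n) (mul h (B (f(0 := x)))) - B (f(0 := mul h x))) \<in> span G"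
          by (rule span_diff[OF s1 s2])
        then have "B (f(0 := mul h x)) \<in> span G" by (simp only: diff_diff_eq2 add_diff_cancel_left')
        then show ?thesis using hx by blast
      qed
    qed
    then show "B f \<in> span G" by simp
  qed
  moreover have "span G \<noteq> {0}"
  proof -
    obtain z where "z \<in> I" "z \<noteq> 0" using Inz I0 by blast
    then show ?thesis using IG by blast
  qed
  ultimately show ?thesis by blast
qed

lemma span_B: "span (range B) = UNIV"
proof -
  have "span (range B) = {0} \<or> span (range B) = UNIV"
  proof (rule simpl)
    show "subspace (span (range B))" by simp
  next
    fix h x assume "x \<in> span (range B)"
    then show "mul h x \<in> span (range B)"
    proof (induct rule: span_induct)
      case base
      show ?case using hom_pre[OF mhom subspace_span] by simp
    next
      case (step x)
      then obtain a where xa: "x = B a" by auto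
      have "scale (of_nat n) (mul h x) \<in> span (range B)"
        unfolding xa tp by (intro span_sum span_base) auto
      then show ?case using unscale[OF subspace_span c_nz] by blast
    qed
  next
    fix f :: "nat \<Rightarrow> 'a" assume "f 0 \<in> span (range B)"
    show "B f \<in> span (range B)" by (intro span_base) auto
  qed
  moreover have "span (range B) \<noteq> {0}"
  proof -
    obtain f where "B f \<noteq> 0" using Bnz by blast
    moreover have "B f \<in> span (range B)" by (rule span_base) (rule rangeI)
    ultimately show ?thesis by blast
  qed
  ultimately show ?thesis by blast
qed


lemma Icomb: "x \<in> I \<Longrightarrow> y \<in> I \<Longrightarrow> x + y = z \<Longrightarrow> z \<in> I"
  using subspace_add[OF Isub] by blast

lemma Isc: "x \<in> I \<Longrightarrow> scale r x \<in> I"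
  using subspace_scale[OF Isub] by blast

lemma upd_swap: "i \<noteq> j \<Longrightarrow> (X(j := x))(i := z) = (X(i := z))(j := x)"
  by (rule ext) auto

lemma L3: assumes j: "j < n"
  shows "(\<Sum>i\<in>{..<n}-{j}. B (X(i := B (a(0 := X i))))) \<in> I"
proof -
  let ?R = "{..<n}-{j}"
  let ?c = "of_nat n :: complex"
  define Yi where "Yi i = X(i := B (a(0 := X i)))" for i
  define g where "g v = (\<Sum>i\<in>?R. B ((Yi i)(j := v)))" for v
  have gsub: "subspace {v. g v \<in> I}"
  proof (rule subspaceI)
    show "0 \<in> {v. g v \<in> I}" using subspace_0[OF Isub] by (simp add: g_def Bzero[OF j])
  next
    fix x y assume "x \<in> {v. g v \<in> I}" "y \<in> {v. g v \<in> I}"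
    moreover have "g (x + y) = g x + g y" by (simp add: g_def Badd[OF j] sum.distrib)
    ultimately show "x + y \<in> {v. g v \<in> I}" using subspace_add[OF Isub] by simp
  next
    fix r x assume "x \<in> {v. g v \<in> I}"
    moreover have "g (scale r x) = scale r (g x)" by (simp add: g_def Bscale[OF j] scale_sum_right)
    ultimately show "scale r x \<in> {v. g v \<in> I}" using subspace_scale[OF Isub] by simp
  qed
  have gall: "g v \<in> I" for v
  proof -
    have "v \<in> span G" using span_G by simp
    then show ?thesis
    proof (induct rule: span_induct)
      case base show ?case using gsub by (simp only: mem_Collect_eq Collect_mem_eq)
    next
      case (step v)
      show ?case
      proof (cases "v \<in> I")
        case True
        show ?thesis unfolding g_def
          by (rule subspace_sum[OF Isub]) (rule slotI[OF j], use True in simp)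
      next
        case False
        with step obtain h x where hx: "v = mul h x" and xI: "x \<in> I" unfolding G_def by auto
        define Y where "Y = X(j := x)"
        define U where "U = X(j := mul h x)"
        define t where "t i = B ((Yi i)(j := x))" for i
        define s where "s = (\<Sum>i\<in>?R. t i)"
        define T where "T = g (mul h x)"
        define ax where "ax = B (a(0 := x))"
        define tj where "tj = B (X(j := ax))"
        define W where "W = B (X(j := B (a(0 := mul h x))))"
        have axI: "ax \<in> I" unfolding ax_def by (rule Iid) (simp add: xI)
        have YI: "B Y \<in> I" unfolding Y_def by (rule slotI[OF j]) (simp add: xI)
        have fa: "scale ?c (mul h s) - T \<in> I"
        proof -
          have "scale ?c (mul h s) - T = (\<Sum>i\<in>?R. scale ?c (mul h (t i)) - B ((Yi i)(j := mul h x)))"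
            by (simp add: s_def T_def g_def msum scale_sum_right sum_subtractf)
          also have "\<dots> \<in> I"
            by (rule subspace_sum[OF Isub]) (unfold t_def, rule A[OF j xI])
          finally show ?thesis .
        qed
        have fb: "B (a(0 := B Y)) = tj + s"
        proof -
          have "B (a(0 := B Y)) = (\<Sum>i<n. B (Y(i := B (a(0 := Y i)))))" by (rule filip)
          also have "\<dots> = B (Y(j := B (a(0 := Y j)))) + (\<Sum>i\<in>?R. B (Y(i := B (a(0 := Y i)))))"
            by (rule sum.remove) (use j in auto)
          also have "B (Y(j := B (a(0 := Y j)))) = tj" by (simp add: Y_def tj_def ax_def)
          also have "(\<Sum>i\<in>?R. B (Y(i := B (a(0 := Y i))))) = s"
            unfolding s_def t_def Yi_def Y_def
            by (rule sum.cong) (auto simp: upd_swap)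
          finally show ?thesis .
        qed
        have fc: "B (a(0 := B U)) = W + T"
        proof -
          have "B (a(0 := B U)) = (\<Sum>i<n. B (U(i := B (a(0 := U i)))))" by (rule filip)
          also have "\<dots> = B (U(j := B (a(0 := U j)))) + (\<Sum>i\<in>?R. B (U(i := B (a(0 := U i)))))"
            by (rule sum.remove) (use j in auto)
          also have "B (U(j := B (a(0 := U j)))) = W" by (simp add: U_def W_def)
          also have "(\<Sum>i\<in>?R. B (U(i := B (a(0 := U i))))) = T"
            unfolding T_def g_def Yi_def U_def
            by (rule sum.cong) (auto simp: upd_swap)
          finally show ?thesis .
        qed
        have fd: "scale ?c (mul h (B (a(0 := B Y)))) - B (a(0 := mul h (B Y))) \<in> I"
          by (rule A[OF n0 YI])
        have fe0: "scale ?c (mul h (B Y)) - B U \<in> I"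
          unfolding Y_def U_def by (rule A[OF j xI])
        have fe: "scale ?c (B (a(0 := mul h (B Y)))) - B (a(0 := B U)) \<in> I"
        proof -
          have "B (a(0 := scale ?c (mul h (B Y)) - B U)) \<in> I" by (rule Iid) (simp add: fe0)
          then show ?thesis by (simp add: Bdiff[OF n0] Bscale[OF n0])
        qed
        have ff: "scale ?c (mul h ax) - B (a(0 := mul h x)) \<in> I"
          unfolding ax_def by (rule A[OF n0 xI])
        have fg: "scale ?c (mul h tj) - B (X(j := mul h ax)) \<in> I"
          unfolding tj_def by (rule A[OF j axI])
        have fg2: "scale ?c (B (X(j := mul h ax))) - W \<in> I"
        proof -
          have "B (X(j := scale ?c (mul h ax) - B (a(0 := mul h x)))) \<in> I"
            by (rule slotI[OF j]) (simp add: ff)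
          then show ?thesis by (simp add: W_def Bdiff[OF j] Bscale[OF j])
        qed
        define Q where "Q = scale ?c (scale ?c (mul h (B (a(0 := B Y)))))"
        have k1: "Q - scale ?c (B (a(0 := mul h (B Y)))) \<in> I"
          by (rule Icomb[OF Isc[where r="of_nat n", OF fd] subspace_0[OF Isub]]) (simp add: Q_def scale_right_diff_distrib)
        have k2: "Q - (W + T) \<in> I"
          by (rule Icomb[OF k1 fe]) (simp add: fc)
        have k3: "scale ?c (scale ?c (mul h tj)) - W \<in> I"
          by (rule Icomb[OF Isc[where r="of_nat n", OF fg] fg2]) (simp add: scale_right_diff_distrib)
        have k4: "scale ?c (scale ?c (mul h s)) - scale ?c T \<in> I"
          by (rule Icomb[OF Isc[where r="of_nat n", OF fa] subspace_0[OF Isub]]) (simp add: scale_right_diff_distrib)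
        have Qeq: "Q = scale ?c (scale ?c (mul h tj)) + scale ?c (scale ?c (mul h s))"
          by (simp add: Q_def fb madd scale_right_distrib)
        have k5: "Q - (W + scale ?c T) \<in> I"
          by (rule Icomb[OF k3 k4]) (simp add: Qeq)
        have "scale (?c - 1) T \<in> I"
          by (rule Icomb[OF k2 subspace_neg[OF Isub k5]]) (simp add: scale_left_diff_distrib)
        then have "T \<in> I" by (rule unscale[OF Isub c1_nz])
        then show ?thesis by (simp add: T_def hx)
      qed
    qed
  qed
  have geq: "g (X j) = (\<Sum>i\<in>?R. B (X(i := B (a(0 := X i)))))"
    unfolding g_def Yi_def by (rule sum.cong) (auto intro!: arg_cong[where f=B])
  show ?thesis using gall[of "X j"] unfolding geq .
qed


lemma L4: "B (a(0 := B X)) \<in> I"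
proof -
  let ?c = "of_nat n :: complex"
  define sf where "sf i = B (X(i := B (a(0 := X i))))" for i
  define S where "S = B (a(0 := B X))"
  have Ssum: "S = (\<Sum>i<n. sf i)" unfolding S_def sf_def by (rule filip)
  have each: "S - sf j \<in> I" if jn: "j < n" for j
  proof -
    have "(\<Sum>i<n. sf i) = sf j + (\<Sum>i\<in>{..<n}-{j}. sf i)" by (rule sum.remove) (use jn in auto)
    then have "S - sf j = (\<Sum>i\<in>{..<n}-{j}. sf i)" by (simp add: Ssum)
    then show ?thesis using L3[OF jn, of X a] by (simp add: sf_def)
  qed
  have "(\<Sum>j<n. S - sf j) \<in> I" by (rule subspace_sum[OF Isub]) (simp add: each)
  moreover have "(\<Sum>j<n. S - sf j) = scale (?c - 1) S"
    by (simp add: sum_subtractf sum_constant_scale Ssum[symmetric] scale_left_diff_distrib)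
  ultimately have "scale (?c - 1) S \<in> I" by simp
  then have "S \<in> I" by (rule unscale[OF Isub c1_nz])
  then show ?thesis by (simp add: S_def)
qed

lemma Ifull: "I = UNIV"
proof -
  have sub: "subspace {w. \<forall>a. B (a(0 := w)) \<in> I}"
  proof (rule subspaceI)
    show "0 \<in> {w. \<forall>a. B (a(0 := w)) \<in> I}" using subspace_0[OF Isub] by (simp add: Bzero[OF n0])
  next
    fix x y assume "x \<in> {w. \<forall>a. B (a(0 := w)) \<in> I}" "y \<in> {w. \<forall>a. B (a(0 := w)) \<in> I}"
    then show "x + y \<in> {w. \<forall>a. B (a(0 := w)) \<in> I}" using subspace_add[OF Isub] by (simp add: Badd[OF n0])
  next
    fix r x assume "x \<in> {w. \<forall>a. B (a(0 := w)) \<in> I}"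
    then show "scale r x \<in> {w. \<forall>a. B (a(0 := w)) \<in> I}" using subspace_scale[OF Isub] by (simp add: Bscale[OF n0])
  qed
  have "span (range B) \<subseteq> {w. \<forall>a. B (a(0 := w)) \<in> I}"
    by (rule span_minimal[OF _ sub]) (auto simp: L4)
  then have all: "B (a(0 := w)) \<in> I" for a w using span_B by blast
  have "B f \<in> I" for f using all[of f "f 0"] by simp
  then have "range B \<subseteq> I" by blast
  then have "span (range B) \<subseteq> I" by (rule span_minimal[OF _ Isub])
  then show ?thesis using span_B by blast
qed

end

theorem mainTheorem6:
  fixes scale :: "complex \<Rightarrow> 'a::ab_group_add \<Rightarrow> 'a"
    and mul :: "'a \<Rightarrow> 'a \<Rightarrow> 'a"
    and B :: "(nat \<Rightarrow> 'a) \<Rightarrow> 'a"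
    and n :: nat
  assumes "n \<ge> 2"
    and "transposed_Poisson_n_Lie scale mul n B"
    and "simple_TP scale mul n B"
  shows "simple_n_Lie scale n B"
proof -
  from assms(2) have ca: "comm_assoc_algebra scale mul" and nl: "n_Lie_algebra scale n B"
    and tpe: "\<forall>h a. scale (of_nat n) (mul h (B a)) = (\<Sum>i<n. B (a(i := mul h (a i))))"
    unfolding transposed_Poisson_n_Lie_def by auto
  from nl have vs: "vector_space scale" and lin: "n_linear scale n B"
    and sk: "skew_symmetric n B" and fi: "filippov n B"
    unfolding n_Lie_algebra_def by auto
  from assms(3) have bnz: "\<exists>f. B f \<noteq> 0"
    and simp0: "\<forall>J. TP_ideal scale mul n B J \<longrightarrow> J = {0} \<or> J = UNIV"
    unfolding simple_TP_def by auto
  show ?thesis unfolding simple_n_Lie_def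
  proof (intro conjI allI impI)
    show "\<exists>f. B f \<noteq> 0" by (rule bnz)
  next
    fix I assume id: "n_Lie_ideal scale n B I"
    show "I = {0} \<or> I = UNIV"
    proof (cases "I = {0}")
      case True then show ?thesis by simp
    next
      case False
      have "TPL scale mul n B I"
      proof (rule TPL.intro[OF vs], rule TPL_axioms.intro)
        show "2 \<le> n" by (rule assms(1))
        show "\<And>f i. i < n \<Longrightarrow> Vector_Spaces.linear scale scale (\<lambda>x. B (f(i := x)))"
          using lin unfolding n_linear_def by blast
        show "\<And>f i j. i < n \<Longrightarrow> j < n \<Longrightarrow> i \<noteq> j \<Longrightarrow> B (f(i := f j, j := f i)) = - B f"
          using sk unfolding skew_symmetric_def by blast
        show "\<And>x y. B (y(0 := B x)) = (\<Sum>i<n. B (x(i := B (y(0 := x i)))))"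
          using fi unfolding filippov_def by blast
        show "\<And>a. Vector_Spaces.linear scale scale (\<lambda>x. mul a x)"
          using ca unfolding comm_assoc_algebra_def by blast
        show "\<And>a b c. mul (mul a b) c = mul a (mul b c)"
          using ca unfolding comm_assoc_algebra_def by blast
        show "\<And>h a. scale (of_nat n) (mul h (B a)) = (\<Sum>i<n. B (a(i := mul h (a i))))"
          using tpe by blast
        show "module.subspace scale I" using id unfolding n_Lie_ideal_def by blast
        show "\<And>f. f 0 \<in> I \<Longrightarrow> B f \<in> I" using id unfolding n_Lie_ideal_def by blast
        show "I \<noteq> {0}" by (rule False)
        show "\<exists>f. B f \<noteq> 0" by (rule bnz)
        show "\<And>J. module.subspace scale J \<Longrightarrow> (\<And>h x. x \<in> J \<Longrightarrow> mul h x \<in> J)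
                  \<Longrightarrow> (\<And>f. f 0 \<in> J \<Longrightarrow> B f \<in> J) \<Longrightarrow> J = {0} \<or> J = UNIV"
          using simp0 unfolding TP_ideal_def by blast
      qed
      then show ?thesis using TPL.Ifull by blast
    qed
  qed
qed

end
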